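(* For every integer $n>1$, the aura $\mathbb{R}_+^{[n]}$ is archimedean but does not have tempered growth.
   Context: A halo is a commutative unital semiring with a partial order compatible with $+$ and $\cdot$; an aura is a halo whose semiring is a semifield; positive means $0<1$. For positive auras $R_1,\dots,R_n$, the lexicographic product $[\prod]R_i$ is the set $\{0\}\cup\prod_i R_i^\times$ (where $R_i^\times=R_i\setminus\{0\}$ and $0$ is identified with $(0,\dots,0)$), with componentwise addition and multiplication and the lexicographic order (first coordinate most significant); $\mathbb{R}_+^{[n]}$ denotes the lexicographic product of $n$ copies of $\mathbb{R}_+$ (usual operations and order). A positive halo $A$ is archimedean if $A$ is not reduced to $\{0,1\}$ and for all $x>y>0$ there is $m\in\mathbb{N}$ with $my>x$. A halo $R$ has tempered growth if for every non-zero $P\in\mathbb{N}[X]$ and $x\in R$, ($x^m\le P(m)$ for all $m\in\mathbb{N}$) implies $x\le1$, natural numbers being interpreted as sums of $1$. *)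

theory Defs
  imports Main "HOL-Computational_Algebra.Polynomial"
begin

record 'a halo_struct =
  carrier :: "'a set"
  zero :: 'a
  one :: 'a
  add :: "'a \<Rightarrow> 'a \<Rightarrow> 'a"
  mul :: "'a \<Rightarrow> 'a \<Rightarrow> 'a"
  le :: "'a \<Rightarrow> 'a \<Rightarrow> bool"

definition lt :: "('a, 'b) halo_struct_scheme \<Rightarrow> 'a \<Rightarrow> 'a \<Rightarrow> bool" where
  "lt H x y \<longleftrightarrow> le H x y \<and> x \<noteq> y"

definition nsmul :: "('a, 'b) halo_struct_scheme \<Rightarrow> nat \<Rightarrow> 'a \<Rightarrow> 'a" where
  "nsmul H m y = (add H y ^^ m) (zero H)"

definition natH :: "('a, 'b) halo_struct_scheme \<Rightarrow> nat \<Rightarrow> 'a" where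
  "natH H m = nsmul H m (one H)"

definition powH :: "('a, 'b) halo_struct_scheme \<Rightarrow> 'a \<Rightarrow> nat \<Rightarrow> 'a" where
  "powH H x m = (mul H x ^^ m) (one H)"

definition archimedean :: "('a, 'b) halo_struct_scheme \<Rightarrow> bool" where
  "archimedean A \<longleftrightarrow> lt A (zero A) (one A) \<and>
     carrier A \<noteq> {zero A, one A} \<and>
     (\<forall>x\<in>carrier A. \<forall>y\<in>carrier A. lt A y x \<and> lt A (zero A) y \<longrightarrow>
        (\<exists>m::nat. lt A x (nsmul A m y)))"

definition tempered_growth :: "('a, 'b) halo_struct_scheme \<Rightarrow> bool" where
  "tempered_growth R \<longleftrightarrow>
     (\<forall>P :: nat poly. P \<noteq> 0 \<longrightarrow> (\<forall>x\<in>carrier R.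
        (\<forall>m::nat. le R (powH R x m) (natH R (poly P m))) \<longrightarrow> le R x (one R)))"

text \<open>The lexicographic power \<open>\<real>\<^sub>+^[n]\<close>: elements are lists of length n,
  either the zero list or with all entries strictly positive; componentwise
  operations; lexicographic order with the first coordinate most significant.\<close>
definition Rplus_lex :: "nat \<Rightarrow> real list halo_struct" where
  "Rplus_lex n = \<lparr> carrier = {xs. length xs = n \<and>
                       (xs = replicate n 0 \<or> (\<forall>x\<in>set xs. 0 < x))},
                   zero = replicate n 0,
                   one = replicate n 1,
                   add = map2 (+),
                   mul = map2 (*),
                   le = (\<lambda>xs ys. xs = ys \<or> ord_class.lexordp xs ys) \<rparr>"

end

theory Submission
  imports Defs
begin

lemma map2_self: "map2 f y (map g y) = map (\<lambda>a. f a (g a)) y"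
  by (induction y) auto

lemma map2_add0: "map2 (+) y (replicate (length y) (0::real)) = y"
  by (induction y) auto
lemma map2_mul1: "map2 (*) y (replicate (length y) (1::real)) = y"
  by (induction y) auto

lemma nsmul_R: "nsmul (Rplus_lex n) m y = (if m = 0 then replicate n 0 else map (\<lambda>a. real m * a) y)"
  if "length y = n"
proof (induction m)
  case 0 then show ?case by (simp add: nsmul_def Rplus_lex_def)
next
  case (Suc m)
  have "nsmul (Rplus_lex n) (Suc m) y = map2 (+) y (nsmul (Rplus_lex n) m y)"
    by (simp add: nsmul_def Rplus_lex_def)
  also have "\<dots> = map (\<lambda>a. real (Suc m) * a) y"
  proof (cases "m = 0")
    case True then show ?thesis using that Suc
      using map2_add0[of y] by simp
  next
    case False then show ?thesis using Suc
      by (simp add: map2_self algebra_simps)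
  qed
  finally show ?case by simp
qed

lemma powH_R: "powH (Rplus_lex n) x m = (if m = 0 then replicate n 1 else map (\<lambda>a. a ^ m) x)"
  if "length x = n"
proof (induction m)
  case 0 then show ?case by (simp add: powH_def Rplus_lex_def)
next
  case (Suc m)
  have "powH (Rplus_lex n) x (Suc m) = map2 (*) x (powH (Rplus_lex n) x m)"
    by (simp add: powH_def Rplus_lex_def)
  also have "\<dots> = map (\<lambda>a. a ^ Suc m) x"
  proof (cases "m = 0")
    case True then show ?thesis using that Suc
      using map2_mul1[of x] by simp
  next
    case False then show ?thesis using Suc
      by (simp add: map2_self)
  qed
  finally show ?case by simp
qed

lemma natH_R: "natH (Rplus_lex n) m = replicate n (real m)"
  using nsmul_R[of "replicate n 1" n m] by (simp add: natH_def Rplus_lex_def map_replicate_const)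

theorem lemma1p33:
  fixes n :: nat
  assumes "n > 1"
  shows "archimedean (Rplus_lex n) \<and> \<not> tempered_growth (Rplus_lex n)"
proof
  define k where "k = n - 2"
  have k: "n = Suc (Suc k)" using assms k_def by simp
  show "archimedean (Rplus_lex n)"
    unfolding archimedean_def
  proof (intro conjI ballI impI)
    show "lt (Rplus_lex n) (zero (Rplus_lex n)) (one (Rplus_lex n))"
      by (simp add: lt_def Rplus_lex_def k)
    have "replicate n 2 \<in> carrier (Rplus_lex n)"
      by (simp add: Rplus_lex_def)
    moreover have "replicate n (2::real) \<notin> {zero (Rplus_lex n), one (Rplus_lex n)}"
      by (simp add: Rplus_lex_def k)
    ultimately show "carrier (Rplus_lex n) \<noteq> {zero (Rplus_lex n), one (Rplus_lex n)}" by blast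
  next
    fix x y assume xc: "x \<in> carrier (Rplus_lex n)" and yc: "y \<in> carrier (Rplus_lex n)"
      and h: "lt (Rplus_lex n) y x \<and> lt (Rplus_lex n) (zero (Rplus_lex n)) y"
    have ly: "length y = n" and lx: "length x = n" using xc yc by (auto simp: Rplus_lex_def)
    have "y \<noteq> replicate n 0" using h by (auto simp: lt_def Rplus_lex_def)
    then have ypos: "\<forall>a\<in>set y. 0 < a" using yc by (auto simp: Rplus_lex_def)
    obtain b ys where y: "y = b # ys" using ly k by (cases y) auto
    obtain a xs where x: "x = a # xs" using lx k by (cases x) auto
    have b: "b > 0" using ypos y by auto
    obtain m0 :: nat where m0: "a / b < real m0" using reals_Archimedean2 by blast
    define m where "m = Suc m0"
    have m: "a / b < real m" using m0 m_def by simp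
    have "a < real m * b" using m b by (simp add: field_simps)
    moreover have "m \<noteq> 0" using m_def by simp
    ultimately have am: "a < real m * b" and m0': "m \<noteq> 0" by auto
    have ns: "nsmul (Rplus_lex n) m y = (real m * b) # map ((*) (real m)) ys"
      using nsmul_R[OF ly, of m] m0' y by simp
    have "lt (Rplus_lex n) x (nsmul (Rplus_lex n) m y)"
      unfolding ns lt_def using am by (simp add: Rplus_lex_def x)
    then show "\<exists>m. lt (Rplus_lex n) x (nsmul (Rplus_lex n) m y)" by blast
  qed
  show "\<not> tempered_growth (Rplus_lex n)"
  proof
    assume tg: "tempered_growth (Rplus_lex n)"
    define x :: "real list" where "x = 1 # 2 # replicate k 1"
    have xc: "x \<in> carrier (Rplus_lex n)" by (simp add: Rplus_lex_def x_def k)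
    have "\<forall>m::nat. le (Rplus_lex n) (powH (Rplus_lex n) x m) (natH (Rplus_lex n) (poly [:1,1:] m))"
    proof
      fix m :: nat
      show "le (Rplus_lex n) (powH (Rplus_lex n) x m) (natH (Rplus_lex n) (poly [:1,1:] m))"
      proof -
        have lx: "length x = n" by (simp add: x_def k)
        have nh: "natH (Rplus_lex n) (poly [:1,1:] m) = replicate n (real m + 1)"
          by (simp add: natH_R)
        show ?thesis
        proof (cases "m = 0")
          case True
          then show ?thesis unfolding nh powH_R[OF lx] by (simp add: Rplus_lex_def)
        next
          case False
          then have "powH (Rplus_lex n) x m = 1 # 2 ^ m # replicate k 1"
            unfolding powH_R[OF lx] by (simp add: x_def)
          then show ?thesis unfolding nh using False by (simp add: Rplus_lex_def k)
        qed
      qed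
    qed
    then have "le (Rplus_lex n) x (one (Rplus_lex n))"
    proof -
      have p0: "[:1,1:] \<noteq> (0::nat poly)" by simp
      show ?thesis using tg p0 xc \<open>\<forall>m. _\<close> unfolding tempered_growth_def by blast
    qed
    then show False by (simp add: Rplus_lex_def x_def k)
  qed
qed

end
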